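(* Assume the setting described in the context and suppose the event $\mathcal{E}$ holds. Let $p\in\{1,\dots,k-1\}$, let $S^{(p)}\subseteq[n]$ with $|S^{(p)}|=p$, let $\hat{\mathbf{e}}^{(p)}$ be a unit eigenvector for the largest eigenvalue of $\hat{\boldsymbol{\Gamma}}_{S^{(p)},S^{(p)}}$ zero-padded to $\mathbb{R}^n$, assume $\langle\mathbf{v},\hat{\mathbf{e}}^{(p)}\rangle\neq0$, and let $S^{(p+1)}$ be the index set of the $p+1$ largest entries of $|\hat{\boldsymbol{\Gamma}}\hat{\mathbf{e}}^{(p)}|$. Then $$ \|\mathbf{v}_{S^{(p+1)}}\|_2\ \ge\ \sqrt{\frac{1}{s(p+1)}}-\frac{2}{\theta|\langle\mathbf{v},\hat{\mathbf{e}}^{(p)}\rangle|}\cdot C_0(1+\theta)\sqrt{\frac{2(p+1)\log n}{m}}, $$ where $C_0$ is the constant in the definition of $\mathcal{E}$.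
   Context: Let $n\ge 2$, $m\ge1$, $\theta>0$, $k\in[n]$; $\mathbf{v}\in\mathbb{R}^n$ a unit vector with at most $k$ nonzero entries; $\mathbf{x}_1,\dots,\mathbf{x}_m$ i.i.d. $\mathcal{N}(\mathbf{0},\mathbf{I}_n+\theta\mathbf{v}\mathbf{v}^\top)$; $\hat{\boldsymbol{\Gamma}}=\frac1m\sum_i\mathbf{x}_i\mathbf{x}_i^\top-\mathbf{I}_n$; $\mathbf{W}=\hat{\boldsymbol{\Gamma}}-\theta\mathbf{v}\mathbf{v}^\top$. $\mathbf{v}_S$ is the restriction of $\mathbf{v}$ to $S$, $\mathbf{A}_{S,S}$ a principal submatrix, $\|\cdot\|_2$ Euclidean/spectral norm. $v_{(1)}\ge v_{(2)}\ge\cdots$ are the sorted absolute entries of $\mathbf{v}$ and $s(p)=(\sum_{i=1}^pv_{(i)}^2)^{-1}$ for $1\le p\le k$. Fix an absolute constant $C_0>0$; $\mathcal{E}$ is the event that $\|\mathbf{W}_{S,S}\|_2\le C_0(1+\theta)\sqrt{|S|\log n/m}$ for all nonempty $S\subseteq[n]$. *)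

theory Defs
  imports "HOL-Analysis.Analysis"
begin

text \<open>Vectors in R^n are modelled as real^'n with n = CARD('n).
  Principal submatrices A_{S,S} are modelled by restricting both input
  (vectors supported on S) and output (coordinates outside S zeroed);
  this is the zero-padded embedding of R^S into R^n.\<close>

definition supported_on :: "'n::finite set \<Rightarrow> real^'n \<Rightarrow> bool" where
  "supported_on S x \<longleftrightarrow> (\<forall>i. i \<notin> S \<longrightarrow> x $ i = 0)"

definition restrict_vec :: "'n::finite set \<Rightarrow> real^'n \<Rightarrow> real^'n" where
  "restrict_vec S x = (\<chi> i. if i \<in> S then x $ i else 0)"

definition sub_spec_norm :: "real^'n^'n \<Rightarrow> 'n::finite set \<Rightarrow> real" where
  "sub_spec_norm A S =
     Sup {norm (restrict_vec S (A *v x)) | x. supported_on S x \<and> norm x \<le> 1}"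

definition is_sub_eigvec :: "real^'n^'n \<Rightarrow> 'n::finite set \<Rightarrow> real \<Rightarrow> real^'n \<Rightarrow> bool" where
  "is_sub_eigvec A S l x \<longleftrightarrow>
     x \<noteq> 0 \<and> supported_on S x \<and> restrict_vec S (A *v x) = l *\<^sub>R x"

definition is_top_sub_eigvec :: "real^'n^'n \<Rightarrow> 'n::finite set \<Rightarrow> real^'n \<Rightarrow> bool" where
  "is_top_sub_eigvec A S e \<longleftrightarrow> norm e = 1 \<and>
     (\<exists>l. is_sub_eigvec A S l e \<and> (\<forall>mu y. is_sub_eigvec A S mu y \<longrightarrow> mu \<le> l))"

definition top_sq_sum :: "real^'n::finite \<Rightarrow> nat \<Rightarrow> real" where
  "top_sq_sum v p = Max {(\<Sum>i\<in>T. (v $ i)^2) | T. card T = p}"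

definition s_fun :: "real^'n::finite \<Rightarrow> nat \<Rightarrow> real" where
  "s_fun v p = inverse (top_sq_sum v p)"

definition is_top_index_set :: "real^'n::finite \<Rightarrow> nat \<Rightarrow> 'n set \<Rightarrow> bool" where
  "is_top_index_set u q S \<longleftrightarrow> card S = q \<and>
     (\<forall>i\<in>S. \<forall>j. j \<notin> S \<longrightarrow> \<bar>u $ j\<bar> \<le> \<bar>u $ i\<bar>)"

definition Gamma_hat :: "nat \<Rightarrow> (nat \<Rightarrow> real^'n::finite) \<Rightarrow> real^'n^'n" where
  "Gamma_hat m xs = (\<chi> a b. (1 / real m) * (\<Sum>i<m. xs i $ a * xs i $ b)) - mat 1"

definition outer :: "real^'n::finite \<Rightarrow> real^'n \<Rightarrow> real^'n^'n" where
  "outer u w = (\<chi> a b. u $ a * w $ b)"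

end

theory Submission
  imports Defs
begin

lemma restrict_sq: "(norm (restrict_vec S x))^2 = (\<Sum>i\<in>S. (x$i)^2)"
proof -
  have "(norm (restrict_vec S x))^2 = (\<Sum>i\<in>UNIV. (restrict_vec S x $ i)^2)"
    unfolding norm_vec_def L2_set_def by (simp add: sum_nonneg)
  also have "\<dots> = (\<Sum>i\<in>UNIV. if i \<in> S then (x$i)^2 else 0)"
    by (rule sum.cong) (auto simp: restrict_vec_def)
  also have "\<dots> = (\<Sum>i\<in>S. (x$i)^2)"
    by (simp add: sum.If_cases)
  finally show ?thesis .
qed

lemma restrict_mono: "T \<subseteq> U \<Longrightarrow> norm (restrict_vec T x) \<le> norm (restrict_vec U x)"
proof -
  assume "T \<subseteq> U"
  then have "(norm (restrict_vec T x))^2 \<le> (norm (restrict_vec U x))^2"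
    unfolding restrict_sq by (intro sum_mono2) auto
  then show ?thesis by (metis norm_ge_zero power2_le_imp_le)
qed

lemma restrict_lin: "restrict_vec S (a *\<^sub>R x + y) = a *\<^sub>R restrict_vec S x + restrict_vec S y"
  by (simp add: restrict_vec_def vec_eq_iff)

lemma sum_swap_le:
  fixes f :: "'a \<Rightarrow> real"
  assumes "finite A" "finite B" "card A = card B" "\<And>a b. a \<in> A \<Longrightarrow> b \<in> B \<Longrightarrow> f b \<le> f a"
  shows "sum f B \<le> sum f A"
proof -
  obtain h where h: "bij_betw h A B" using finite_same_card_bij assms by blast
  have "sum f B = sum (f \<circ> h) A" using sum.reindex_bij_betw[OF h, of f] by simp
  also have "\<dots> \<le> sum f A" using h assms(4) by (intro sum_mono) (auto simp: bij_betw_def)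
  finally show ?thesis .
qed

lemma top_index_norm:
  fixes u :: "real^'n::finite"
  assumes "is_top_index_set u q S1" "card T = q"
  shows "norm (restrict_vec T u) \<le> norm (restrict_vec S1 u)"
proof -
  have cS: "card S1 = q" and top: "\<And>i j. i \<in> S1 \<Longrightarrow> j \<notin> S1 \<Longrightarrow> \<bar>u$j\<bar> \<le> \<bar>u$i\<bar>"
    using assms(1) unfolding is_top_index_set_def by auto
  have c: "card (S1 - T) = card (T - S1)"
    using cS assms(2) by (metis card_Diff_subset_Int finite Int_commute finite_Int)
  have "(\<Sum>i\<in>T - S1. (u$i)^2) \<le> (\<Sum>i\<in>S1 - T. (u$i)^2)"
  proof (rule sum_swap_le)
    fix a b assume "a \<in> S1 - T" "b \<in> T - S1"
    then have "\<bar>u$b\<bar> \<le> \<bar>u$a\<bar>" using top by auto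
    then show "(u$b)^2 \<le> (u$a)^2" by (simp add: abs_le_square_iff)
  qed (use c in auto)
  moreover have "(\<Sum>i\<in>T. (u$i)^2) = (\<Sum>i\<in>T \<inter> S1. (u$i)^2) + (\<Sum>i\<in>T - S1. (u$i)^2)"
    by (metis finite sum.Int_Diff)
  moreover have "(\<Sum>i\<in>S1. (u$i)^2) = (\<Sum>i\<in>S1 \<inter> T. (u$i)^2) + (\<Sum>i\<in>S1 - T. (u$i)^2)"
    by (metis finite sum.Int_Diff)
  ultimately have "(norm (restrict_vec T u))^2 \<le> (norm (restrict_vec S1 u))^2"
    unfolding restrict_sq by (simp add: Int_commute)
  then show ?thesis by (metis norm_ge_zero power2_le_imp_le)
qed

lemma spec_bound:
  assumes "supported_on U x" "norm x \<le> 1"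
  shows "norm (restrict_vec U (A *v x)) \<le> sub_spec_norm A U"
proof -
  obtain K where K: "\<And>y. norm (A *v y) \<le> norm y * K"
    using bounded_linear.bounded[OF matrix_vector_mul_bounded_linear] by blast
  have K0: "0 \<le> K" using K[of "axis undefined 1"] by (simp add: order_trans[OF norm_ge_zero])
  have "bdd_above {norm (restrict_vec U (A *v x)) | x. supported_on U x \<and> norm x \<le> 1}"
  proof (rule bdd_aboveI)
    fix r assume "r \<in> {norm (restrict_vec U (A *v x)) | x. supported_on U x \<and> norm x \<le> 1}"
    then obtain y where "r = norm (restrict_vec U (A *v y))" "norm y \<le> 1" by auto
    moreover have "norm (restrict_vec U (A *v y)) \<le> norm (A *v y)"
      using restrict_mono[of U UNIV "A *v y"] by (simp add: restrict_vec_def)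
    moreover have "norm y * K \<le> K" using \<open>norm y \<le> 1\<close> K0 by (simp add: mult_left_le_one_le)
    ultimately show "r \<le> K" using K[of y] by linarith
  qed
  then show ?thesis unfolding sub_spec_norm_def using assms by (intro cSup_upper) auto
qed

theorem lemma4:
  fixes v :: "real^'n"
    and xs :: "nat \<Rightarrow> real^'n"
    and m k p :: nat
    and \<theta> C\<^sub>0 :: real
    and Sp Sp1 :: "'n set"
    and e :: "real^'n"
  defines "n \<equiv> CARD('n)"
  defines "G \<equiv> Gamma_hat m xs"
  defines "W \<equiv> Gamma_hat m xs - \<theta> *\<^sub>R outer v v"
  assumes n2: "n \<ge> 2"
    and m1: "m \<ge> 1"
    and theta_pos: "\<theta> > 0"
    and k_range: "1 \<le> k" "k \<le> n"
    and v_unit: "norm v = 1"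
    and v_sparse: "card {i. v $ i \<noteq> 0} \<le> k"
    and C0_pos: "C\<^sub>0 > 0"
    and event_E: "\<forall>S. S \<noteq> {} \<longrightarrow>
                    sub_spec_norm W S \<le> C\<^sub>0 * (1 + \<theta>) * sqrt (real (card S) * ln (real n) / real m)"
    and p_range: "1 \<le> p" "p \<le> k - 1"
    and Sp_card: "card Sp = p"
    and e_top: "is_top_sub_eigvec G Sp e"
    and ve_ne0: "v \<bullet> e \<noteq> 0"
    and Sp1_def: "is_top_index_set (G *v e) (p + 1) Sp1"
  shows "norm (restrict_vec Sp1 v) \<ge>
           sqrt (1 / s_fun v (p + 1))
           - 2 / (\<theta> * \<bar>v \<bullet> e\<bar>) * (C\<^sub>0 * (1 + \<theta>) * sqrt (2 * real (p + 1) * ln (real n) / real m))"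
proof -
  define a where "a = \<theta> * \<bar>v \<bullet> e\<bar>"
  define X where "X = C\<^sub>0 * (1 + \<theta>) * sqrt (2 * real (p + 1) * ln (real n) / real m)"
  define u where "u = G *v e"
  have a0: "a > 0" using theta_pos ve_ne0 by (simp add: a_def)
  have e1: "norm e = 1" and esupp: "supported_on Sp e"
    using e_top unfolding is_top_sub_eigvec_def is_sub_eigvec_def by auto
  have decomp: "u = (\<theta> * (v \<bullet> e)) *\<^sub>R v + W *v e"
    unfolding u_def W_def G_def
    by (simp add: vec_eq_iff matrix_vector_mult_def outer_def inner_vec_def sum_distrib_left
          sum_subtractf algebra_simps)
  have bound: "norm (restrict_vec R (W *v e)) \<le> X" if R: "card R \<le> p + 1" for R
  proof -
    define U where "U = R \<union> Sp"
    have Une: "U \<noteq> {}" using Sp_card p_range by (auto simp: U_def)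
    have cU: "card U \<le> 2 * (p + 1)"
      using card_Un_le[of R Sp] R Sp_card by (simp add: U_def)
    have "norm (restrict_vec R (W *v e)) \<le> norm (restrict_vec U (W *v e))"
      by (rule restrict_mono) (auto simp: U_def)
    also have "\<dots> \<le> sub_spec_norm W U"
      using esupp e1 by (intro spec_bound) (auto simp: supported_on_def U_def)
    also have "\<dots> \<le> C\<^sub>0 * (1 + \<theta>) * sqrt (real (card U) * ln (real n) / real m)"
      using event_E Une by blast
    also have "\<dots> \<le> X"
    proof -
      have ln0: "ln (real n) \<ge> 0" using n2 by simp
      have "real (card U) * ln (real n) \<le> 2 * real (p + 1) * ln (real n)"
        using cU ln0 by (intro mult_right_mono) auto
      then have "real (card U) * ln (real n) / real m \<le> 2 * real (p + 1) * ln (real n) / real m"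
        using m1 by (intro divide_right_mono) auto
      then show ?thesis unfolding X_def using C0_pos theta_pos
        by (intro mult_left_mono real_sqrt_le_mono) auto
    qed
    finally show ?thesis .
  qed
  obtain T where cT: "card T = p + 1" and Tmax: "top_sq_sum v (p + 1) = (\<Sum>i\<in>T. (v$i)^2)"
  proof -
    let ?M = "{(\<Sum>i\<in>T. (v $ i)^2) | T. card T = p + 1}"
    have fin: "finite ?M" by simp
    have "p + 1 \<le> card (UNIV :: 'n set)" using p_range k_range unfolding n_def by linarith
    then obtain T0 :: "'n set" where "card T0 = p + 1" by (meson obtain_subset_with_card_n)
    then have ne: "?M \<noteq> {}" by blast
    have "Max ?M \<in> ?M" using Max_in[OF fin ne] .
    then show ?thesis using that unfolding top_sq_sum_def by blast
  qed
  have nT: "norm (restrict_vec T v) = sqrt (1 / s_fun v (p + 1))"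
  proof -
    have "norm (restrict_vec T v) = sqrt ((norm (restrict_vec T v))^2)" by simp
    also have "\<dots> = sqrt (top_sq_sum v (p + 1))" by (simp only: restrict_sq Tmax)
    moreover have "1 / s_fun v (p + 1) = top_sq_sum v (p + 1)"
      unfolding s_fun_def by (metis inverse_eq_divide inverse_inverse_eq)
    ultimately show ?thesis by simp
  qed
  have lowT: "a * norm (restrict_vec T v) - X \<le> norm (restrict_vec T u)"
  proof -
    have eq: "restrict_vec T u = (\<theta> * (v \<bullet> e)) *\<^sub>R restrict_vec T v + restrict_vec T (W *v e)"
      by (simp add: decomp restrict_lin)
    have "a * norm (restrict_vec T v) = norm ((\<theta> * (v \<bullet> e)) *\<^sub>R restrict_vec T v)"
      using theta_pos by (simp add: a_def abs_mult)
    also have "\<dots> = norm (restrict_vec T u - restrict_vec T (W *v e))" by (simp add: eq)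
    also have "\<dots> \<le> norm (restrict_vec T u) + norm (restrict_vec T (W *v e))"
      by (rule norm_triangle_ineq4)
    finally show ?thesis using bound[of T] cT by linarith
  qed
  have upS: "norm (restrict_vec Sp1 u) \<le> a * norm (restrict_vec Sp1 v) + X"
  proof -
    have eq: "restrict_vec Sp1 u = (\<theta> * (v \<bullet> e)) *\<^sub>R restrict_vec Sp1 v + restrict_vec Sp1 (W *v e)"
      by (simp add: decomp restrict_lin)
    have cS: "card Sp1 = p + 1" using Sp1_def by (simp add: is_top_index_set_def)
    have "norm (restrict_vec Sp1 u) \<le> norm ((\<theta> * (v \<bullet> e)) *\<^sub>R restrict_vec Sp1 v) + norm (restrict_vec Sp1 (W *v e))"
      unfolding eq by (rule norm_triangle_ineq)
    also have "norm ((\<theta> * (v \<bullet> e)) *\<^sub>R restrict_vec Sp1 v) = a * norm (restrict_vec Sp1 v)"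
      using theta_pos by (simp add: a_def abs_mult)
    finally show ?thesis using bound[of Sp1] cS by linarith
  qed
  have mid: "norm (restrict_vec T u) \<le> norm (restrict_vec Sp1 u)"
    using top_index_norm[OF Sp1_def[folded u_def] cT] .
  have "a * norm (restrict_vec T v) - 2 * X \<le> a * norm (restrict_vec Sp1 v)"
    using lowT upS mid by linarith
  then have "norm (restrict_vec T v) - 2 / a * X \<le> norm (restrict_vec Sp1 v)"
    using a0 by (simp add: field_simps)
  then show ?thesis unfolding nT a_def X_def .
qed

end
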